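(* Let $\eta>0$, let $\ell_i^{(1)},\dots,\ell_i^{(T)}\in\mathbb{R}^{n_i}$ be an arbitrary sequence of vectors (with $\ell_i^{(0)}=0$), and let $x_i^{(1)},\dots,x_i^{(T)}$ be the Optimistic Hedge iterates with step size $\eta$ on this sequence. Define $\tilde x_i^{(0)}$ to be the uniform distribution on $[n_i]$ and, for $t\in[T]$, $\tilde x_i^{(t)}(j)=\frac{x_i^{(t)}(j)\exp(-\eta(\ell_i^{(t)}(j)-\ell_i^{(t-1)}(j)))}{\sum_kx_i^{(t)}(k)\exp(-\eta(\ell_i^{(t)}(k)-\ell_i^{(t-1)}(k)))}$. Then for every $x^\star\in\Delta^{n_i}$, $$\sum_{t=1}^T\langle x_i^{(t)}-x^\star,\ell_i^{(t)}\rangle\le\frac{\ln n_i}{\eta}+\sum_{t=1}^T\|x_i^{(t)}-\tilde x_i^{(t)}\|^*_{x_i^{(t)}}\sqrt{\mathrm{Var}_{x_i^{(t)}}(\ell_i^{(t)}-\ell_i^{(t-1)})}-\frac1\eta\sum_{t=1}^T\mathrm{KL}(\tilde x_i^{(t)};x_i^{(t)})-\frac1\eta\sum_{t=1}^T\mathrm{KL}(x_i^{(t)};\tilde x_i^{(t-1)}).$$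
   Context: Optimistic Hedge: $x_i^{(1)}$ uniform on $[n_i]$, $x_i^{(t+1)}(j)\propto x_i^{(t)}(j)\exp(-\eta(2\ell_i^{(t)}(j)-\ell_i^{(t-1)}(j)))$. For full-support $P\in\Delta^n$ and $v\in\mathbb{R}^n$, $\|v\|^*_P=\sqrt{\sum_jv(j)^2/P(j)}$ and $\mathrm{Var}_P(v)=\sum_jP(j)(v(j)-\langle P,v\rangle)^2$. $\mathrm{KL}(P;Q)=\sum_jP(j)\ln(P(j)/Q(j))$ with the natural logarithm; $\ln n_i$ is the natural logarithm. *)

theory Defs
  imports "HOL-Analysis.Analysis"
begin

text \<open>Actions are indexed by {..<n}. Distributions and vectors are functions nat => real;
  only values on {..<n} matter. A loss sequence is l :: nat => nat => real, l t j = loss of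
  action j at round t.\<close>

definition uniform_dist :: "nat \<Rightarrow> nat \<Rightarrow> real" where
  "uniform_dist n = (\<lambda>j. 1 / real n)"

definition prob_simplex :: "nat \<Rightarrow> (nat \<Rightarrow> real) set" where
  "prob_simplex n = {p. (\<forall>j<n. 0 \<le> p j) \<and> (\<Sum>j<n. p j) = 1}"

definition reweight :: "nat \<Rightarrow> (nat \<Rightarrow> real) \<Rightarrow> (nat \<Rightarrow> real) \<Rightarrow> nat \<Rightarrow> real" where
  "reweight n P w = (\<lambda>j. P j * exp (- w j) / (\<Sum>k<n. P k * exp (- w k)))"

text \<open>oh_aux eta n l k is the Optimistic Hedge iterate x^(k+1).\<close>
fun oh_aux :: "real \<Rightarrow> nat \<Rightarrow> (nat \<Rightarrow> nat \<Rightarrow> real) \<Rightarrow> nat \<Rightarrow> nat \<Rightarrow> real" where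
  "oh_aux eta n l 0 = uniform_dist n"
| "oh_aux eta n l (Suc k) =
     reweight n (oh_aux eta n l k) (\<lambda>j. eta * (2 * l (Suc k) j - l k j))"

definition opt_hedge :: "real \<Rightarrow> nat \<Rightarrow> (nat \<Rightarrow> nat \<Rightarrow> real) \<Rightarrow> nat \<Rightarrow> nat \<Rightarrow> real" where
  "opt_hedge eta n l t = oh_aux eta n l (t - 1)"

definition opt_hedge_tilde :: "real \<Rightarrow> nat \<Rightarrow> (nat \<Rightarrow> nat \<Rightarrow> real) \<Rightarrow> nat \<Rightarrow> nat \<Rightarrow> real" where
  "opt_hedge_tilde eta n l t = (if t = 0 then uniform_dist n
     else reweight n (opt_hedge eta n l t) (\<lambda>j. eta * (l t j - l (t - 1) j)))"

definition inner_n :: "nat \<Rightarrow> (nat \<Rightarrow> real) \<Rightarrow> (nat \<Rightarrow> real) \<Rightarrow> real" where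
  "inner_n n P v = (\<Sum>j<n. P j * v j)"

definition dual_norm :: "nat \<Rightarrow> (nat \<Rightarrow> real) \<Rightarrow> (nat \<Rightarrow> real) \<Rightarrow> real" where
  "dual_norm n P v = sqrt (\<Sum>j<n. (v j)\<^sup>2 / P j)"

definition var_n :: "nat \<Rightarrow> (nat \<Rightarrow> real) \<Rightarrow> (nat \<Rightarrow> real) \<Rightarrow> real" where
  "var_n n P v = (\<Sum>j<n. P j * (v j - inner_n n P v)\<^sup>2)"

definition KL_n :: "nat \<Rightarrow> (nat \<Rightarrow> real) \<Rightarrow> (nat \<Rightarrow> real) \<Rightarrow> real" where
  "KL_n n P Q = (\<Sum>j<n. P j * ln (P j / Q j))"

end

theory Submission
  imports Defs
begin

definition pos :: "nat \<Rightarrow> (nat \<Rightarrow> real) \<Rightarrow> bool" where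
  "pos n P \<longleftrightarrow> (\<forall>j<n. P j > 0)"

lemma Z_pos:
  assumes "pos n P" "n \<ge> 1"
  shows "(\<Sum>k<n. P k * exp (- w k)) > 0"
proof -
  have "0 \<in> {..<n}" using assms(2) by auto
  thus ?thesis using assms(1) unfolding pos_def
    by (intro sum_pos) auto
qed

lemma reweight_pos:
  assumes "pos n P" "n \<ge> 1"
  shows "pos n (reweight n P w)"
  using Z_pos[OF assms, of w] assms(1) unfolding pos_def reweight_def by auto

lemma reweight_sum:
  assumes "pos n P" "n \<ge> 1"
  shows "(\<Sum>j<n. reweight n P w j) = 1"
  using Z_pos[OF assms, of w] unfolding reweight_def
  by (simp add: sum_divide_distrib[symmetric])

lemma reweight_ln:
  assumes "pos n P" "n \<ge> 1" "j < n"
  shows "ln (reweight n P w j / P j) = - w j - ln (\<Sum>k<n. P k * exp (- w k))"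
proof -
  have Z: "(\<Sum>k<n. P k * exp (- w k)) > 0" by (rule Z_pos[OF assms(1,2)])
  have Pj: "P j > 0" using assms unfolding pos_def by auto
  have "reweight n P w j / P j = exp (- w j) / (\<Sum>k<n. P k * exp (- w k))"
    using Pj unfolding reweight_def by simp
  thus ?thesis using Z by (simp add: ln_div)
qed

lemma reweight_comp:
  assumes "pos n P" "n \<ge> 1"
  shows "reweight n (reweight n P a) b = reweight n P (\<lambda>j. a j + b j)"
proof
  fix j
  define Z where "Z = (\<Sum>k<n. P k * exp (- a k))"
  have Z: "Z > 0" unfolding Z_def by (rule Z_pos[OF assms])
  have "(\<Sum>k<n. P k * exp (- a k) / Z * exp (- b k)) = (\<Sum>k<n. P k * exp (- (a k + b k))) / Z"
    by (simp add: sum_divide_distrib exp_add[symmetric] mult.assoc)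
  thus "reweight n (reweight n P a) b j = reweight n P (\<lambda>j. a j + b j) j"
    unfolding reweight_def Z_def[symmetric] using Z
    by (simp add: exp_add[symmetric] mult.assoc)
qed

lemma reweight_zero:
  assumes "n \<ge> 1"
  shows "reweight n (uniform_dist n) (\<lambda>j. 0) = uniform_dist n"
  using assms unfolding reweight_def uniform_dist_def by (auto simp: fun_eq_iff)

lemma three_point:
  assumes P: "pos n P" and n: "n \<ge> 1" and Q: "Q = reweight n P w"
    and y0: "\<forall>j<n. y j \<ge> 0" and y1: "(\<Sum>j<n. y j) = 1"
  shows "(\<Sum>j<n. (Q j - y j) * w j) = KL_n n y P - KL_n n y Q - KL_n n Q P"
proof -
  define Z where "Z = (\<Sum>k<n. P k * exp (- w k))"
  have Qp: "pos n Q" using reweight_pos[OF P n] Q by simp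
  have Q1: "(\<Sum>j<n. Q j) = 1" using reweight_sum[OF P n] Q by simp
  have L: "\<And>j. j < n \<Longrightarrow> ln (Q j / P j) = - w j - ln Z"
    using reweight_ln[OF P n] Q Z_def by simp
  have e1: "\<And>j. j < n \<Longrightarrow> y j * ln (y j / P j) - y j * ln (y j / Q j) = y j * ln (Q j / P j)"
  proof -
    fix j assume j: "j < n"
    have pj: "P j > 0" and qj: "Q j > 0" using P Qp j unfolding pos_def by auto
    show "y j * ln (y j / P j) - y j * ln (y j / Q j) = y j * ln (Q j / P j)"
    proof (cases "y j = 0")
      case False
      hence "y j > 0" using y0 j by force
      thus ?thesis using pj qj by (simp add: ln_div right_diff_distrib)
    qed simp
  qed
  have "KL_n n y P - KL_n n y Q - KL_n n Q P = (\<Sum>j<n. (y j - Q j) * ln (Q j / P j))"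
    unfolding KL_n_def using e1 by (simp add: sum_subtractf[symmetric] left_diff_distrib)
  also have "\<dots> = (\<Sum>j<n. (y j - Q j) * (- w j - ln Z))"
    using L by simp
  also have "\<dots> = (\<Sum>j<n. (Q j - y j) * w j) - ln Z * ((\<Sum>j<n. y j) - (\<Sum>j<n. Q j))"
    by (simp add: algebra_simps sum_subtractf sum_distrib_left sum.distrib)
  finally show ?thesis using y1 Q1 by simp
qed

lemma uniform_pos: "n \<ge> 1 \<Longrightarrow> pos n (uniform_dist n)"
  unfolding pos_def uniform_dist_def by auto

lemma oh_pos: "n \<ge> 1 \<Longrightarrow> pos n (oh_aux eta n l k)"
  by (induction k) (auto intro: reweight_pos uniform_pos)

lemma x_pos: "n \<ge> 1 \<Longrightarrow> pos n (opt_hedge eta n l t)"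
  unfolding opt_hedge_def by (rule oh_pos)

lemma xt_pos: "n \<ge> 1 \<Longrightarrow> pos n (opt_hedge_tilde eta n l t)"
  unfolding opt_hedge_tilde_def using reweight_pos[OF x_pos] uniform_pos by auto

lemma x_from_xt:
  assumes n: "n \<ge> 1" and l0: "\<And>j. l 0 j = 0" and t: "t \<ge> 1"
  shows "opt_hedge eta n l t = reweight n (opt_hedge_tilde eta n l (t - 1)) (\<lambda>j. eta * l (t - 1) j)"
proof (cases "t = 1")
  case True
  thus ?thesis using n l0 reweight_zero[OF n]
    by (simp add: opt_hedge_def opt_hedge_tilde_def)
next
  case False
  then obtain k where k: "t = Suc (Suc k)" using t by (metis Suc_le_D One_nat_def not0_implies_Suc)
  have "opt_hedge eta n l t = reweight n (oh_aux eta n l k) (\<lambda>j. eta * (2 * l (Suc k) j - l k j))"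
    using k by (simp add: opt_hedge_def)
  also have "(\<lambda>j. eta * (2 * l (Suc k) j - l k j)) = (\<lambda>j. eta * (l (Suc k) j - l k j) + eta * l (Suc k) j)"
    by (auto simp: algebra_simps)
  also have "reweight n (oh_aux eta n l k) \<dots> = reweight n (reweight n (oh_aux eta n l k) (\<lambda>j. eta * (l (Suc k) j - l k j))) (\<lambda>j. eta * l (Suc k) j)"
    by (rule reweight_comp[symmetric, OF oh_pos[OF n] n])
  finally show ?thesis using k by (simp add: opt_hedge_def opt_hedge_tilde_def)
qed

lemma xt_from_xt:
  assumes n: "n \<ge> 1" and l0: "\<And>j. l 0 j = 0" and t: "t \<ge> 1"
  shows "opt_hedge_tilde eta n l t = reweight n (opt_hedge_tilde eta n l (t - 1)) (\<lambda>j. eta * l t j)"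
proof -
  have "opt_hedge_tilde eta n l t = reweight n (opt_hedge eta n l t) (\<lambda>j. eta * (l t j - l (t - 1) j))"
    using t by (simp add: opt_hedge_tilde_def)
  also have "\<dots> = reweight n (opt_hedge_tilde eta n l (t - 1)) (\<lambda>j. eta * l (t - 1) j + eta * (l t j - l (t - 1) j))"
    using x_from_xt[of n l t eta] n l0 t reweight_comp[OF xt_pos[OF n] n] by simp
  also have "(\<lambda>j. eta * l (t - 1) j + eta * (l t j - l (t - 1) j)) = (\<lambda>j. eta * l t j)"
    by (auto simp: algebra_simps)
  finally show ?thesis .
qed

lemma cs:
  assumes "pos n P" and "(\<Sum>j<n. a j) = 0"
  shows "(\<Sum>j<n. a j * m j) \<le> dual_norm n P a * sqrt (var_n n P m)"
proof -
  define c where "c = inner_n n P m"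
  have pj: "\<And>j. j < n \<Longrightarrow> P j > 0" using assms(1) unfolding pos_def by auto
  have "(\<Sum>j<n. a j * m j) = (\<Sum>j<n. a j * m j) - c * (\<Sum>j<n. a j)" using assms(2) by simp
  also have "\<dots> = (\<Sum>j<n. (a j / sqrt (P j)) * (sqrt (P j) * (m j - c)))"
  proof -
    have "\<And>j. j < n \<Longrightarrow> a j / sqrt (P j) * (sqrt (P j) * (m j - c)) = a j * m j - c * a j"
    proof -
      fix j assume "j < n"
      hence "sqrt (P j) > 0" using pj by simp
      thus "a j / sqrt (P j) * (sqrt (P j) * (m j - c)) = a j * m j - c * a j"
        by (simp add: field_simps)
    qed
    thus ?thesis by (simp add: sum_distrib_left sum_subtractf[symmetric])
  qed
  finally have e: "(\<Sum>j<n. a j * m j) = \<dots>" .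
  have "(\<Sum>j<n. (a j / sqrt (P j)) * (sqrt (P j) * (m j - c)))\<^sup>2
        \<le> (\<Sum>j<n. (a j / sqrt (P j))\<^sup>2) * (\<Sum>j<n. (sqrt (P j) * (m j - c))\<^sup>2)"
    by (rule Cauchy_Schwarz_ineq_sum)
  also have "(\<Sum>j<n. (a j / sqrt (P j))\<^sup>2) = (\<Sum>j<n. (a j)\<^sup>2 / P j)"
    using pj by (intro sum.cong) (auto simp: power_divide less_imp_le)
  also have "(\<Sum>j<n. (sqrt (P j) * (m j - c))\<^sup>2) = var_n n P m"
    unfolding var_n_def c_def using pj by (intro sum.cong) (auto simp: power_mult_distrib less_imp_le)
  finally have "(\<Sum>j<n. a j * m j)\<^sup>2 \<le> (\<Sum>j<n. (a j)\<^sup>2 / P j) * var_n n P m" using e by simp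
  hence "\<bar>\<Sum>j<n. a j * m j\<bar> \<le> sqrt ((\<Sum>j<n. (a j)\<^sup>2 / P j) * var_n n P m)"
    using real_le_rsqrt real_sqrt_abs by (metis real_sqrt_le_mono)
  thus ?thesis unfolding dual_norm_def by (simp add: real_sqrt_mult)
qed

lemma KL_nonneg:
  assumes "pos n Q" "(\<Sum>j<n. Q j) = 1" "\<forall>j<n. y j \<ge> 0" "(\<Sum>j<n. y j) = 1"
  shows "KL_n n y Q \<ge> 0"
proof -
  have "\<And>j. j < n \<Longrightarrow> y j * ln (Q j / y j) \<le> Q j - y j"
  proof -
    fix j assume j: "j < n"
    have qj: "Q j > 0" using assms(1) j unfolding pos_def by auto
    show "y j * ln (Q j / y j) \<le> Q j - y j"
    proof (cases "y j = 0")
      case True thus ?thesis using qj by simp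
    next
      case False
      hence yj: "y j > 0" using assms(3) j by force
      have "ln (Q j / y j) \<le> Q j / y j - 1" using qj yj by (intro ln_le_minus_one) auto
      hence "y j * ln (Q j / y j) \<le> y j * (Q j / y j - 1)" using yj by (intro mult_left_mono) auto
      thus ?thesis using yj by (simp add: algebra_simps)
    qed
  qed
  hence "(\<Sum>j<n. y j * ln (Q j / y j)) \<le> (\<Sum>j<n. Q j - y j)" by (intro sum_mono) auto
  also have "\<dots> = 0" using assms(2,4) by (simp add: sum_subtractf)
  finally have A: "(\<Sum>j<n. y j * ln (Q j / y j)) \<le> 0" .
  have "\<And>j. j < n \<Longrightarrow> y j * ln (y j / Q j) = - (y j * ln (Q j / y j))"
  proof -
    fix j assume j: "j < n"
    have qj: "Q j > 0" using assms(1) j unfolding pos_def by auto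
    show "y j * ln (y j / Q j) = - (y j * ln (Q j / y j))"
    proof (cases "y j = 0")
      case False
      hence yj: "y j > 0" using assms(3) j by force
      thus ?thesis using qj by (simp add: ln_div algebra_simps)
    qed simp
  qed
  hence "KL_n n y Q = - (\<Sum>j<n. y j * ln (Q j / y j))"
    unfolding KL_n_def by (simp add: sum_negf[symmetric])
  thus ?thesis using A by simp
qed

lemma KL_uniform:
  assumes n: "n \<ge> 1" "\<forall>j<n. y j \<ge> 0" "(\<Sum>j<n. y j) = 1"
  shows "KL_n n y (uniform_dist n) \<le> ln (real n)"
proof -
  have "\<And>j. j < n \<Longrightarrow> y j * ln (y j / uniform_dist n j) \<le> y j * ln (real n)"
  proof -
    fix j assume j: "j < n"
    show "y j * ln (y j / uniform_dist n j) \<le> y j * ln (real n)"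
    proof (cases "y j = 0")
      case False
      hence yj: "y j > 0" using assms(2) j by force
      have "y j \<le> 1"
      proof -
        have "y j \<le> (\<Sum>i<n. y i)" using j assms(2) by (intro member_le_sum) auto
        thus ?thesis using assms(3) by simp
      qed
      hence "ln (y j) \<le> 0" using yj by simp
      moreover have "ln (y j / uniform_dist n j) = ln (y j) + ln (real n)"
        using yj n by (simp add: uniform_dist_def ln_mult)
      moreover have "y j * ln (y j) \<le> 0" using yj \<open>ln (y j) \<le> 0\<close> by (simp add: mult_nonneg_nonpos)
      ultimately show ?thesis using yj by (simp add: distrib_left)
    qed simp
  qed
  hence "KL_n n y (uniform_dist n) \<le> (\<Sum>j<n. y j * ln (real n))"
    unfolding KL_n_def by (intro sum_mono) auto
  also have "\<dots> = ln (real n)" using assms(3) by (simp add: sum_distrib_right[symmetric])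
  finally show ?thesis .
qed

lemma telescope: "(\<Sum>t=1..T. (D (t - 1) - D t :: real)) = D 0 - D (T::nat)"
  by (induction T) auto

lemma uniform_sum: "n \<ge> 1 \<Longrightarrow> (\<Sum>j<n. uniform_dist n j) = 1"
  unfolding uniform_dist_def by simp

lemma x_sum: "n \<ge> 1 \<Longrightarrow> (\<Sum>j<n. opt_hedge eta n l t j) = 1"
  unfolding opt_hedge_def
  by (cases "t - 1") (auto simp: uniform_sum intro!: reweight_sum oh_pos)

lemma xt_sum: "n \<ge> 1 \<Longrightarrow> (\<Sum>j<n. opt_hedge_tilde eta n l t j) = 1"
  unfolding opt_hedge_tilde_def
  by (auto simp: uniform_sum intro!: reweight_sum x_pos)

lemma step:
  fixes eta :: real
  assumes n: "n \<ge> 1" and l0: "\<And>j. l 0 j = 0" and t: "t \<ge> 1"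
    and y0: "\<forall>j<n. y j \<ge> 0" and y1: "(\<Sum>j<n. y j) = 1"
  defines "x \<equiv> opt_hedge eta n l"
    and "xt \<equiv> opt_hedge_tilde eta n l"
  shows "eta * inner_n n (\<lambda>j. x t j - y j) (l t)
       = eta * (\<Sum>j<n. (x t j - xt t j) * (l t j - l (t - 1) j))
         + KL_n n y (xt (t - 1)) - KL_n n y (xt t) - KL_n n (xt t) (x t) - KL_n n (x t) (xt (t - 1))"
proof -
  have a: "(\<Sum>j<n. (xt t j - y j) * (eta * l t j)) = KL_n n y (xt (t - 1)) - KL_n n y (xt t) - KL_n n (xt t) (xt (t - 1))"
    unfolding xt_def
    by (rule three_point[OF xt_pos[OF n] n xt_from_xt[of n l t eta, OF n l0 t] y0 y1])
  have xtp: "pos n (xt t)" unfolding xt_def by (rule xt_pos[OF n])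
  have b: "(\<Sum>j<n. (x t j - xt t j) * (eta * l (t - 1) j)) = KL_n n (xt t) (xt (t - 1)) - KL_n n (xt t) (x t) - KL_n n (x t) (xt (t - 1))"
    unfolding xt_def x_def
    by (rule three_point[OF xt_pos[OF n] n x_from_xt[of n l t eta, OF n l0 t]])
       (use xt_pos[OF n] xt_sum[OF n] in \<open>auto simp: pos_def less_imp_le\<close>)
  have "eta * inner_n n (\<lambda>j. x t j - y j) (l t)
      = eta * (\<Sum>j<n. (x t j - xt t j) * (l t j - l (t - 1) j))
        + (\<Sum>j<n. (xt t j - y j) * (eta * l t j)) + (\<Sum>j<n. (x t j - xt t j) * (eta * l (t - 1) j))"
    unfolding inner_n_def sum_distrib_left sum.distrib[symmetric]
    by (intro sum.cong) (auto simp: algebra_simps)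
  thus ?thesis using a b by simp
qed

theorem lemmaA5:
  fixes eta :: real and n T :: nat and l :: "nat \<Rightarrow> nat \<Rightarrow> real"
    and xstar :: "nat \<Rightarrow> real"
  assumes eta_pos: "eta > 0"
    and n_pos: "n \<ge> 1"
    and l0: "\<And>j. l 0 j = 0"
    and xstar: "xstar \<in> prob_simplex n"
  defines "x \<equiv> opt_hedge eta n l"
    and "xt \<equiv> opt_hedge_tilde eta n l"
  shows "(\<Sum>t=1..T. inner_n n (\<lambda>j. x t j - xstar j) (l t))
         \<le> ln (real n) / eta
           + (\<Sum>t=1..T. dual_norm n (x t) (\<lambda>j. x t j - xt t j)
                         * sqrt (var_n n (x t) (\<lambda>j. l t j - l (t - 1) j)))
           - (1 / eta) * (\<Sum>t=1..T. KL_n n (xt t) (x t))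
           - (1 / eta) * (\<Sum>t=1..T. KL_n n (x t) (xt (t - 1)))"
proof -
  have y0: "\<forall>j<n. xstar j \<ge> 0" and y1: "(\<Sum>j<n. xstar j) = 1"
    using xstar unfolding prob_simplex_def by auto
  define S where "S t = (\<Sum>j<n. (x t j - xt t j) * (l t j - l (t - 1) j))" for t
  define B where "B t = dual_norm n (x t) (\<lambda>j. x t j - xt t j)
                         * sqrt (var_n n (x t) (\<lambda>j. l t j - l (t - 1) j))" for t
  define D where "D t = KL_n n xstar (xt t)" for t
  define K1 where "K1 t = KL_n n (xt t) (x t)" for t
  define K2 where "K2 t = KL_n n (x t) (xt (t - 1))" for t
  have st: "inner_n n (\<lambda>j. x t j - xstar j) (l t) = S t + (D (t - 1) - D t - K1 t - K2 t) / eta"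
    if t: "t \<in> {1..T}" for t
  proof -
    have "eta * inner_n n (\<lambda>j. x t j - xstar j) (l t) = eta * S t + (D (t - 1) - D t - K1 t - K2 t)"
      using step[of n l t xstar eta, OF n_pos l0 _ y0 y1] t
      unfolding S_def D_def K1_def K2_def x_def xt_def by simp
    thus ?thesis using eta_pos by (simp add: field_simps)
  qed
  have SB: "S t \<le> B t" for t
    unfolding S_def B_def
    by (rule cs) (use x_pos[OF n_pos] x_sum[OF n_pos] xt_sum[OF n_pos] in \<open>auto simp: x_def xt_def sum_subtractf\<close>)
  have "(\<Sum>t=1..T. inner_n n (\<lambda>j. x t j - xstar j) (l t))
      = (\<Sum>t=1..T. S t + (D (t - 1) - D t - K1 t - K2 t) / eta)"
    using st by (intro sum.cong) auto
  also have "\<dots> = (\<Sum>t=1..T. S t) + (1 / eta) * ((\<Sum>t=1..T. D (t - 1) - D t) - (\<Sum>t=1..T. K1 t) - (\<Sum>t=1..T. K2 t))"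
    by (simp add: sum.distrib sum_subtractf sum_divide_distrib[symmetric])
  also have "(\<Sum>t=1..T. D (t - 1) - D t) = D 0 - D T" by (rule telescope)
  also have "D 0 - D T \<le> ln (real n)"
  proof -
    have "D 0 \<le> ln (real n)" unfolding D_def xt_def opt_hedge_tilde_def
      using KL_uniform[OF n_pos y0 y1] by simp
    moreover have "D T \<ge> 0" unfolding D_def xt_def
      by (rule KL_nonneg[OF xt_pos[OF n_pos] xt_sum[OF n_pos] y0 y1])
    ultimately show ?thesis by simp
  qed
  hence "(\<Sum>t=1..T. S t) + (1 / eta) * ((D 0 - D T) - (\<Sum>t=1..T. K1 t) - (\<Sum>t=1..T. K2 t))
       \<le> (\<Sum>t=1..T. B t) + (1 / eta) * (ln (real n) - (\<Sum>t=1..T. K1 t) - (\<Sum>t=1..T. K2 t))"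
    using eta_pos SB by (intro add_mono sum_mono mult_left_mono) auto
  also have "\<dots> = ln (real n) / eta + (\<Sum>t=1..T. B t) - (1 / eta) * (\<Sum>t=1..T. K1 t) - (1 / eta) * (\<Sum>t=1..T. K2 t)"
    by (simp add: algebra_simps)
  finally show ?thesis unfolding B_def K1_def K2_def .
qed

end
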